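(* Suppose $J$ satisfies (J) and (J1). For $0<L_1<L_2$ let $\psi(x)=\min\{1,(L_2-|x|)/L_1\}$, $x\in\mathbb R$. Then for every sufficiently small $\epsilon>0$ there exist $L_\epsilon>0$, $D_1=D_1(\epsilon)>0$, $D_2=D_2(\epsilon)>0$ such that whenever $L_1>L_\epsilon$ and $L_2-L_1>2L_\epsilon$: $\int_0^{L_2}\tilde J(r,\rho)\psi(\rho)d\rho\ge(1-\epsilon)\psi(r)$ for $r\in[0,(L_2-L_1)/2]$, and $\int_0^{L_2}\tilde J(r,\rho)\psi(\rho)d\rho\ge(1-\epsilon)\psi(r)-\frac{D_1}{L_1r}-\frac{D_2}{r^2}$ for $r\in[(L_2-L_1)/2,L_2]$.
   Context: $N\ge2$, $B_\rho=\{|x|<\rho\}\subset\mathbb R^N$. (J): $J\in C(\mathbb R_+)\cap L^\infty(\mathbb R_+)$, $J\ge0$, $J(0)>0$, $\int_{\mathbb R^N}J(|x|)dx=1$. (J1): $\int_0^\infty J(r)r^Ndr<\infty$. $\tilde J(r,\rho)=\int_{\partial B_\rho}J(|x-y|)dS_y$ for $|x|=r$. *)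

theory Defs
  imports "HOL-Analysis.Analysis"
begin

text \<open>Surface measure on the unit sphere of real^'n, defined as the cone measure:
  sigma(A) = N * lambda({t w | 0 < t \<le> 1, w \<in> A}), i.e. N times the push-forward of
  Lebesgue measure on the punctured closed unit ball under y \<mapsto> y/|y|.
  This agrees with the (N-1)-dimensional Hausdorff surface measure.\<close>
definition unit_sphere_measure :: "(real^'n::finite) measure" where
  "unit_sphere_measure =
     density (distr (restrict_space lborel (cball 0 1 - {0})) borel sgn)
             (\<lambda>_. ennreal (real CARD('n)))"

definition sphere_integral :: "real \<Rightarrow> (real^'n::finite \<Rightarrow> real) \<Rightarrow> real" where
  "sphere_integral \<rho> g =
     \<rho> ^ (CARD('n) - 1) * (\<integral>\<omega>. g (\<rho> *\<^sub>R \<omega>) \<partial>(unit_sphere_measure :: (real^'n) measure))"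

text \<open>Jtilde(x, rho) = integral over the sphere of radius rho of J(|x - y|) dS_y
  (only depends on |x| = r).\<close>
definition Jtilde :: "(real \<Rightarrow> real) \<Rightarrow> real^'n::finite \<Rightarrow> real \<Rightarrow> real" where
  "Jtilde J x \<rho> = sphere_integral \<rho> (\<lambda>y::real^'n. J (norm (x - y)))"

definition psi :: "real \<Rightarrow> real \<Rightarrow> real \<Rightarrow> real" where
  "psi L1 L2 s = min 1 ((L2 - \<bar>s\<bar>) / L1)"

end

theory Submission
  imports Defs
begin


lemma sphere_nn:
  fixes G :: "real^'n::finite \<Rightarrow> ennreal"
  assumes G[measurable]: "G \<in> borel_measurable borel"
  shows "(\<integral>\<^sup>+\<omega>. G \<omega> \<partial>(unit_sphere_measure::(real^'n) measure)) =
    (\<integral>\<^sup>+u. ennreal (real CARD('n)) * (G (sgn u) * indicator (cball 0 1 - {0}) u) \<partial>lborel)"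
proof -
  have "(\<integral>\<^sup>+\<omega>. G \<omega> \<partial>(unit_sphere_measure::(real^'n) measure)) =
     (\<integral>\<^sup>+\<omega>. ennreal (real CARD('n)) * G \<omega> \<partial>(distr (restrict_space lborel (cball 0 1 - {0})) borel (sgn::real^'n\<Rightarrow>_)))"
    unfolding unit_sphere_measure_def
    by (subst nn_integral_density) auto
  also have "\<dots> = (\<integral>\<^sup>+u. ennreal (real CARD('n)) * G (sgn u) \<partial>(restrict_space lborel (cball (0::real^'n) 1 - {0})))"
    by (subst nn_integral_distr) (auto intro: measurable_restrict_space1)
  also have "\<dots> = (\<integral>\<^sup>+u. ennreal (real CARD('n)) * G (sgn u) * indicator (cball 0 1 - {0}) u \<partial>lborel)"
    by (subst nn_integral_restrict_space) auto
  finally show ?thesis by (simp add: mult.assoc)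
qed

lemma tail_one:
  fixes a :: real and N :: nat
  assumes "a > 0" "N \<ge> 1"
  shows "(\<integral>\<^sup>+s. ennreal (N * a^N / s^(N+1)) * indicator {a..} s \<partial>lborel) = 1"
proof -
  have "(\<integral>\<^sup>+s. ennreal (N * a^N / s^(N+1)) * indicator {a..} s \<partial>lborel) = ennreal (0 - (- (a^N) / a^N))"
  proof (rule nn_integral_FTC_atLeast[where F="\<lambda>s. -(a^N) / s^N" and T=0])
    show "(\<lambda>s. N * a^N / s^(N+1)) \<in> borel_measurable borel" by measurable
    fix x assume x: "a \<le> x"
    then have "x > 0" using assms by auto
    show "0 \<le> N * a^N / x^(N+1)" using \<open>x>0\<close> assms by auto
    show "((\<lambda>s. -(a^N) / s^N) has_real_derivative N * a^N / x^(N+1)) (at x)"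
      using \<open>x>0\<close> assms
      apply (auto intro!: derivative_eq_intros)
      apply (simp add: field_simps power_Suc)
      using power_Suc[of x "N - 1"] by simp
  next
    have "((\<lambda>s. -(a^N) * inverse (s^N)) \<longlongrightarrow> -(a^N) * 0) at_top"
      apply (intro tendsto_intros)
      using assms by (intro tendsto_inverse_0_at_top filterlim_pow_at_top filterlim_ident) auto
    then show "((\<lambda>s. -(a^N) / s^N) \<longlongrightarrow> 0) at_top" by (simp add: divide_inverse)
  qed
  then show ?thesis using assms by simp
qed

lemma scale_nn:
  fixes H :: "real^'n::finite \<Rightarrow> ennreal"
  assumes H[measurable]: "H \<in> borel_measurable borel" and s: "s > 0"
  shows "(\<integral>\<^sup>+y. H y \<partial>lborel) = (\<integral>\<^sup>+u. ennreal (s^CARD('n)) * H (s *\<^sub>R u) \<partial>lborel)"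
proof -
  have eq: "(lborel :: (real^'n) measure) = density (distr lborel borel (\<lambda>x. 0 + s *\<^sub>R x)) (\<lambda>_. \<bar>s\<bar>^DIM(real^'n))"
    using lborel_affine[of s "0::real^'n"] s by simp
  have "(\<integral>\<^sup>+y. H y \<partial>lborel) = (\<integral>\<^sup>+y. H y \<partial>density (distr lborel borel (\<lambda>x. 0 + s *\<^sub>R x)) (\<lambda>_. \<bar>s\<bar>^DIM(real^'n)))"
    by (subst eq[symmetric]) (rule refl)
  also have "\<dots> = (\<integral>\<^sup>+u. ennreal (s^CARD('n)) * H (s *\<^sub>R u) \<partial>lborel)"
    using s by (simp add: nn_integral_density nn_integral_distr ennreal_power)
  finally show ?thesis .
qed

lemma polar:
  fixes g :: "real^'n::finite \<Rightarrow> ennreal"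
  assumes g[measurable]: "g \<in> borel_measurable borel"
  shows "(\<integral>\<^sup>+y. g y \<partial>lborel) = (\<integral>\<^sup>+\<rho>. indicator {0<..} \<rho> * ennreal (\<rho>^(CARD('n)-1)) *
            (\<integral>\<^sup>+\<omega>. g (\<rho> *\<^sub>R \<omega>) \<partial>unit_sphere_measure) \<partial>lborel)"
proof -
  define N where "N = CARD('n)"
  have N1: "N \<ge> 1" unfolding N_def by (simp add: Suc_leI)
  define S where "S = cball (0::real^'n) 1 - {0}"
  have S[measurable]: "S \<in> sets borel" unfolding S_def by auto
  define w where "w = (\<lambda>(s::real) (y::real^'n). if 0 < norm y \<and> norm y \<le> s then N * norm y ^ N / s^(N+1) else 0)"
  define a where "a = (\<lambda>(\<rho>::real) (u::real^'n). N * \<rho>^(N-1) * indicator {0<..} \<rho> * indicator S u)"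
  define b where "b = (\<lambda>(s::real) (u::real^'n). N * norm u ^ N * s^(N-1) * indicator {0<..} s * indicator S u)"
  have w_meas[measurable]: "(\<lambda>(s,y). w s y) \<in> borel_measurable (lborel \<Otimes>\<^sub>M lborel)"
    unfolding w_def by measurable
  have a_meas[measurable]: "(\<lambda>(s,y). a s y) \<in> borel_measurable (lborel \<Otimes>\<^sub>M lborel)"
    unfolding a_def by measurable
  have b_meas[measurable]: "(\<lambda>(s,y). b s y) \<in> borel_measurable (lborel \<Otimes>\<^sub>M lborel)"
    unfolding b_def by measurable
  have "(\<integral>\<^sup>+y. g y \<partial>lborel) = (\<integral>\<^sup>+y. g y * (\<integral>\<^sup>+s. ennreal (w s y) \<partial>lborel) \<partial>lborel)"
  proof (rule nn_integral_cong_AE)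
    show "AE y in lborel. g y = g y * (\<integral>\<^sup>+s. ennreal (w s y) \<partial>lborel)"
      using AE_lborel_singleton[of 0]
    proof eventually_elim
      case (elim y)
      have "(\<integral>\<^sup>+s. ennreal (w s y) \<partial>lborel) = (\<integral>\<^sup>+s. ennreal (N * norm y^N / s^(N+1)) * indicator {norm y..} s \<partial>lborel)"
        using elim by (intro nn_integral_cong) (auto simp: w_def indicator_def)
      also have "\<dots> = 1" using elim N1 by (intro tail_one) auto
      finally show ?case by simp
    qed
  qed
  also have "\<dots> = (\<integral>\<^sup>+y. \<integral>\<^sup>+s. ennreal (w s y) * g y \<partial>lborel \<partial>lborel)"
    by (intro nn_integral_cong) (simp add: nn_integral_cmult mult.commute)
  also have "\<dots> = (\<integral>\<^sup>+s. \<integral>\<^sup>+y. ennreal (w s y) * g y \<partial>lborel \<partial>lborel)"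
    by (rule lborel_pair.Fubini') measurable
  also have "\<dots> = (\<integral>\<^sup>+s. \<integral>\<^sup>+u. ennreal (b s u) * g (s *\<^sub>R u) \<partial>lborel \<partial>lborel)"
  proof (rule nn_integral_cong)
    fix s :: real
    show "(\<integral>\<^sup>+y. ennreal (w s y) * g y \<partial>lborel) = (\<integral>\<^sup>+u. ennreal (b s u) * g (s *\<^sub>R u) \<partial>lborel)"
    proof (cases "s > 0")
      case False
      have "w s y = 0" for y
      proof -
        have "\<not> (0 < norm y \<and> norm y \<le> s)" using False by linarith
        then show ?thesis unfolding w_def by (simp only: if_False split: if_split)
      qed
      with False show ?thesis by (simp add: b_def)
    next
      case True
      have "(\<integral>\<^sup>+y. ennreal (w s y) * g y \<partial>lborel) = (\<integral>\<^sup>+u. ennreal (s^CARD('n)) * (ennreal (w s (s *\<^sub>R u)) * g (s *\<^sub>R u)) \<partial>lborel)"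
        using True by (intro scale_nn) (auto simp: w_def)
      also have "\<dots> = (\<integral>\<^sup>+u. ennreal (b s u) * g (s *\<^sub>R u) \<partial>lborel)"
      proof (rule nn_integral_cong)
        fix u :: "real^'n"
        obtain k where k: "N = Suc k" using N1 by (cases N) auto
        have "s^N * w s (s *\<^sub>R u) = b s u"
        proof (cases "u \<in> S")
          case False
          then have "\<not> (0 < norm (s *\<^sub>R u) \<and> norm (s *\<^sub>R u) \<le> s)"
            using True by (auto simp: S_def)
          then have "w s (s *\<^sub>R u) = 0" unfolding w_def by (simp only: if_False split: if_split)
          then show ?thesis using False by (simp add: b_def)
        next
          case uS: True
          then have "0 < norm (s *\<^sub>R u) \<and> norm (s *\<^sub>R u) \<le> s"
            using True by (auto simp: S_def)
          then have weq: "w s (s *\<^sub>R u) = N * (s * norm u) ^ N / s^(N+1)"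
            unfolding w_def using True by simp
          show ?thesis using uS True unfolding weq b_def k
            by (simp add: field_simps power_mult_distrib)
        qed
        then show "ennreal (s^CARD('n)) * (ennreal (w s (s *\<^sub>R u)) * g (s *\<^sub>R u)) = ennreal (b s u) * g (s *\<^sub>R u)"
          using True by (simp add: N_def mult.assoc[symmetric] ennreal_mult'[symmetric] w_def)
      qed
      finally show ?thesis .
    qed
  qed
  also have "\<dots> = (\<integral>\<^sup>+u. \<integral>\<^sup>+s. ennreal (b s u) * g (s *\<^sub>R u) \<partial>lborel \<partial>lborel)"
    by (rule lborel_pair.Fubini') measurable
  also have "\<dots> = (\<integral>\<^sup>+u. \<integral>\<^sup>+\<rho>. ennreal (a \<rho> u) * g (\<rho> *\<^sub>R sgn u) \<partial>lborel \<partial>lborel)"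
  proof (rule nn_integral_cong)
    fix u :: "real^'n"
    show "(\<integral>\<^sup>+s. ennreal (b s u) * g (s *\<^sub>R u) \<partial>lborel) = (\<integral>\<^sup>+\<rho>. ennreal (a \<rho> u) * g (\<rho> *\<^sub>R sgn u) \<partial>lborel)"
    proof (cases "u \<in> S")
      case False
      then show ?thesis by (simp add: a_def b_def)
    next
      case True
      define c where "c = norm u"
      have c: "c > 0" using True unfolding c_def S_def by auto
      have "(\<integral>\<^sup>+\<rho>. ennreal (a \<rho> u) * g (\<rho> *\<^sub>R sgn u) \<partial>lborel) =
            \<bar>c\<bar> * (\<integral>\<^sup>+s. ennreal (a (0 + c * s) u) * g ((0 + c * s) *\<^sub>R sgn u) \<partial>lborel)"
        using c by (intro nn_integral_real_affine) (auto simp: a_def)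
      also have "\<dots> = (\<integral>\<^sup>+s. ennreal \<bar>c\<bar> * (ennreal (a (0 + c * s) u) * g ((0 + c * s) *\<^sub>R sgn u)) \<partial>lborel)"
        by (rule nn_integral_cmult[symmetric]) (auto simp: a_def)
      also have "\<dots> = (\<integral>\<^sup>+s. ennreal (b s u) * g (s *\<^sub>R u) \<partial>lborel)"
      proof (rule nn_integral_cong)
        fix s :: real
        obtain k where k: "N = Suc k" using N1 by (cases N) auto
        have sg: "(0 + c * s) *\<^sub>R sgn u = s *\<^sub>R u"
          using c by (simp add: sgn_div_norm c_def[symmetric] divide_inverse)
        have ab: "\<bar>c\<bar> * a (0 + c * s) u = b s u"
          using c True unfolding a_def b_def k c_def[symmetric]
          by (auto simp: indicator_def power_mult_distrib zero_less_mult_iff)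
        have "0 \<le> a (0 + c * s) u"
          unfolding a_def using c by (auto simp: indicator_def zero_less_mult_iff)
        then show "ennreal \<bar>c\<bar> * (ennreal (a (0 + c * s) u) * g ((0 + c * s) *\<^sub>R sgn u)) = ennreal (b s u) * g (s *\<^sub>R u)"
          unfolding sg ab[symmetric] by (simp add: ennreal_mult mult.assoc)
      qed
      finally show ?thesis ..
    qed
  qed
  also have "\<dots> = (\<integral>\<^sup>+\<rho>. \<integral>\<^sup>+u. ennreal (a \<rho> u) * g (\<rho> *\<^sub>R sgn u) \<partial>lborel \<partial>lborel)"
    by (rule lborel_pair.Fubini'[symmetric]) measurable
  also have "\<dots> = (\<integral>\<^sup>+\<rho>. indicator {0<..} \<rho> * ennreal (\<rho>^(CARD('n)-1)) *
            (\<integral>\<^sup>+\<omega>. g (\<rho> *\<^sub>R \<omega>) \<partial>unit_sphere_measure) \<partial>lborel)"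
  proof (rule nn_integral_cong)
    fix \<rho> :: real
    have "(\<integral>\<^sup>+\<omega>. g (\<rho> *\<^sub>R \<omega>) \<partial>(unit_sphere_measure::(real^'n) measure)) =
        (\<integral>\<^sup>+u. ennreal (real CARD('n)) * (g (\<rho> *\<^sub>R sgn u) * indicator (cball 0 1 - {0}) u) \<partial>lborel)"
      by (rule sphere_nn) measurable
    then have "indicator {0<..} \<rho> * ennreal (\<rho>^(CARD('n)-1)) * (\<integral>\<^sup>+\<omega>. g (\<rho> *\<^sub>R \<omega>) \<partial>(unit_sphere_measure::(real^'n) measure))
       = (\<integral>\<^sup>+u. indicator {0<..} \<rho> * ennreal (\<rho>^(CARD('n)-1)) * (ennreal (real CARD('n)) * (g (\<rho> *\<^sub>R sgn u) * indicator (cball 0 1 - {0}) u)) \<partial>lborel)"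
    proof -
      assume sp: "(\<integral>\<^sup>+\<omega>. g (\<rho> *\<^sub>R \<omega>) \<partial>(unit_sphere_measure::(real^'n) measure)) =
        (\<integral>\<^sup>+u. ennreal (real CARD('n)) * (g (\<rho> *\<^sub>R sgn u) * indicator (cball 0 1 - {0}) u) \<partial>lborel)"
      have m: "(\<lambda>u. ennreal (real CARD('n)) * (g (\<rho> *\<^sub>R sgn u) * indicator S u)) \<in> borel_measurable lborel"
        by measurable
      show ?thesis unfolding sp
        using nn_integral_cmult[OF m, symmetric, of "indicator {0<..} \<rho> * ennreal (\<rho>^(CARD('n)-1))"]
        by (simp add: S_def)
    qed
    also have "\<dots> = (\<integral>\<^sup>+u. ennreal (a \<rho> u) * g (\<rho> *\<^sub>R sgn u) \<partial>lborel)"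
    proof (rule nn_integral_cong)
      fix u :: "real^'n"
      show "indicator {0<..} \<rho> * ennreal (\<rho>^(CARD('n)-1)) * (ennreal (real CARD('n)) * (g (\<rho> *\<^sub>R sgn u) * indicator (cball 0 1 - {0}) u))
          = ennreal (a \<rho> u) * g (\<rho> *\<^sub>R sgn u)"
        unfolding a_def S_def N_def
        by (cases "\<rho> > 0"; cases "u \<in> cball 0 1 - {0}") (simp_all add: ennreal_mult ac_simps)
    qed
    finally show "(\<integral>\<^sup>+u. ennreal (a \<rho> u) * g (\<rho> *\<^sub>R sgn u) \<partial>lborel) = indicator {0<..} \<rho> * ennreal (\<rho>^(CARD('n)-1)) * (\<integral>\<^sup>+\<omega>. g (\<rho> *\<^sub>R \<omega>) \<partial>(unit_sphere_measure::(real^'n) measure))" ..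
  qed
  finally show ?thesis .
qed

lemma affine_nn:
  fixes H :: "real^'n::finite \<Rightarrow> ennreal"
  assumes H[measurable]: "H \<in> borel_measurable borel" and c: "c \<noteq> 0"
  shows "(\<integral>\<^sup>+y. H y \<partial>lborel) = (\<integral>\<^sup>+u. ennreal (\<bar>c\<bar>^CARD('n)) * H (t + c *\<^sub>R u) \<partial>lborel)"
proof -
  have eq: "(lborel :: (real^'n) measure) = density (distr lborel borel (\<lambda>x. t + c *\<^sub>R x)) (\<lambda>_. \<bar>c\<bar>^DIM(real^'n))"
    using lborel_affine[of c t] c by simp
  have "(\<integral>\<^sup>+y. H y \<partial>lborel) = (\<integral>\<^sup>+y. H y \<partial>density (distr lborel borel (\<lambda>x. t + c *\<^sub>R x)) (\<lambda>_. \<bar>c\<bar>^DIM(real^'n)))"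
    by (subst eq[symmetric]) (rule refl)
  also have "\<dots> = (\<integral>\<^sup>+u. ennreal (\<bar>c\<bar>^CARD('n)) * H (t + c *\<^sub>R u) \<partial>lborel)"
    by (simp add: nn_integral_density nn_integral_distr ennreal_power)
  finally show ?thesis .
qed

lemma translate_nn:
  fixes H :: "real^'n::finite \<Rightarrow> ennreal"
  assumes H[measurable]: "H \<in> borel_measurable borel"
  shows "(\<integral>\<^sup>+y. H y \<partial>lborel) = (\<integral>\<^sup>+u. H (t + u) \<partial>lborel)"
    and "(\<integral>\<^sup>+y. H y \<partial>lborel) = (\<integral>\<^sup>+u. H (t - u) \<partial>lborel)"
  using affine_nn[OF H, of 1 t] affine_nn[OF H, of "-1" t] by simp_all

lemma sets_usm: "sets (unit_sphere_measure :: (real^'n::finite) measure) = sets borel"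
  by (simp add: unit_sphere_measure_def)

lemma usm_finite: "(\<integral>\<^sup>+\<omega>. ennreal M \<partial>(unit_sphere_measure :: (real^'n::finite) measure)) < \<infinity>"
proof -
  have "(\<integral>\<^sup>+\<omega>. ennreal M \<partial>(unit_sphere_measure :: (real^'n::finite) measure)) =
     (\<integral>\<^sup>+u.  ennreal (real CARD('n)) * (ennreal M * indicator (cball (0::real^'n) 1 - {0}) u) \<partial>lborel)"
    by (rule sphere_nn[of "\<lambda>_::real^'n. ennreal M"]) simp
  also have "\<dots> = ennreal (real CARD('n)) * (ennreal M * emeasure lborel (cball (0::real^'n) 1 - {0}))"
  proof -
    have Sm: "cball (0::real^'n) 1 - {0} \<in> sets lborel" by auto
    have m: "(\<lambda>u. ennreal M * indicator (cball (0::real^'n) 1 - {0}) u) \<in> borel_measurable lborel"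
      using Sm by (intro borel_measurable_times_ennreal borel_measurable_indicator) auto
    show ?thesis using nn_integral_cmult[OF m] nn_integral_cmult_indicator[OF Sm] by simp
  qed
  also have "\<dots> < \<infinity>"
    using emeasure_bounded_finite[of "cball (0::real^'n) 1 - {0}"]
    by (simp add: ennreal_mult_less_top bounded_diff)
  finally show ?thesis .
qed

lemma reduce:
  fixes Jp J :: "real \<Rightarrow> real" and x :: "real^'n::finite"
  assumes Jm[measurable]: "Jp \<in> borel_measurable borel"
    and nonneg: "\<And>r. 0 \<le> Jp r" and bdd: "\<And>r. Jp r \<le> M"
    and one: "(\<integral>\<^sup>+z. ennreal (Jp (norm z)) \<partial>(lborel::(real^'n) measure)) = 1"
    and N2: "CARD('n) \<ge> 2" and L: "0 < L1" "L1 < L2"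
    and JJ: "\<And>r. r \<ge> 0 \<Longrightarrow> J r = Jp r"
  shows "(\<integral>\<^sup>+y. ennreal (Jp (norm (x - y)) * max 0 (psi L1 L2 (norm y))) \<partial>lborel)
           = ennreal (integral {0..L2} (\<lambda>\<rho>. Jtilde J x \<rho> * psi L1 L2 \<rho>)) \<and>
         0 \<le> integral {0..L2} (\<lambda>\<rho>. Jtilde J x \<rho> * psi L1 L2 \<rho>)"
proof -
  define N where "N = CARD('n)"
  define S where "S = cball (0::real^'n) 1 - {0}"
  have S[measurable]: "S \<in> sets borel" unfolding S_def by auto
  define Q where "Q = (\<lambda>\<rho>. \<integral>\<^sup>+\<omega>. ennreal (Jp (norm (x - \<rho> *\<^sub>R \<omega>))) \<partial>(unit_sphere_measure::(real^'n) measure))"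
  define F where "F = (\<lambda>\<rho>. Jtilde J x \<rho> * psi L1 L2 \<rho>)"
  define k where "k = (\<lambda>y. Jp (norm (x - y)) * max 0 (psi L1 L2 (norm y)))"
  have km[measurable]: "k \<in> borel_measurable borel" unfolding k_def psi_def by measurable
  have Qalt: "Q \<rho> = (\<integral>\<^sup>+u. ennreal (real CARD('n)) * (ennreal (Jp (norm (x - \<rho> *\<^sub>R sgn u))) * indicator S u) \<partial>lborel)" for \<rho>
    unfolding Q_def S_def by (rule sphere_nn) measurable
  have Qm[measurable]: "Q \<in> borel_measurable borel"
    unfolding Qalt[abs_def] by measurable
  have Qfin: "Q \<rho> < \<infinity>" for \<rho>
  proof -
    have "Q \<rho> \<le> (\<integral>\<^sup>+\<omega>. ennreal M \<partial>(unit_sphere_measure::(real^'n) measure))"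
      unfolding Q_def by (intro nn_integral_mono) (simp add: bdd ennreal_leI)
    also have "\<dots> < \<infinity>" by (rule usm_finite)
    finally show ?thesis .
  qed
  have Jt: "Jtilde J x \<rho> = \<rho>^(N-1) * enn2real (Q \<rho>)" for \<rho>
  proof -
    have "(\<integral>\<omega>. J (norm (x - \<rho> *\<^sub>R \<omega>)) \<partial>(unit_sphere_measure::(real^'n) measure)) =
          (\<integral>\<omega>. Jp (norm (x - \<rho> *\<^sub>R \<omega>)) \<partial>(unit_sphere_measure::(real^'n) measure))"
      by (intro Bochner_Integration.integral_cong) (auto simp: JJ)
    also have "\<dots> = enn2real (Q \<rho>)"
      unfolding Q_def
      by (rule integral_eq_nn_integral) (auto simp: nonneg measurable_cong_sets[OF sets_usm refl])
    finally show ?thesis unfolding Jtilde_def sphere_integral_def N_def by simp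
  qed
  have Fm[measurable]: "F \<in> borel_measurable borel"
    unfolding F_def Jt[abs_def] psi_def by measurable
  have psi_nn: "0 \<le> psi L1 L2 \<rho>" if "0 \<le> \<rho>" "\<rho> \<le> L2" for \<rho>
    using that L unfolding psi_def by auto
  have F_nn: "0 \<le> F \<rho>" if "0 \<le> \<rho>" "\<rho> \<le> L2" for \<rho>
    unfolding F_def Jt using that psi_nn by auto
  have k_le: "ennreal (k y) \<le> ennreal (Jp (norm (x - y)))" for y
  proof -
    have "max 0 (psi L1 L2 (norm y)) \<le> 1" unfolding psi_def by auto
    then show ?thesis unfolding k_def
      by (intro ennreal_leI) (simp add: mult_left_le nonneg)
  qed
  have kfin: "(\<integral>\<^sup>+y. ennreal (k y) \<partial>lborel) < \<infinity>"
  proof -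
    have "(\<integral>\<^sup>+y. ennreal (k y) \<partial>lborel) \<le> (\<integral>\<^sup>+y. ennreal (Jp (norm (x - y))) \<partial>lborel)"
      by (intro nn_integral_mono k_le)
    also have "\<dots> = (\<integral>\<^sup>+u. ennreal (Jp (norm (x - (x + u)))) \<partial>lborel)"
      by (rule translate_nn(1)) measurable
    also have "\<dots> = 1" using one by simp
    finally show ?thesis by (simp add: order_le_less_trans)
  qed
  have "(\<integral>\<^sup>+y. ennreal (k y) \<partial>lborel) = (\<integral>\<^sup>+\<rho>. indicator {0<..} \<rho> * ennreal (\<rho>^(CARD('n)-1)) *
            (\<integral>\<^sup>+\<omega>. ennreal (k (\<rho> *\<^sub>R \<omega>)) \<partial>unit_sphere_measure) \<partial>lborel)"
    by (rule polar) measurable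
  also have "\<dots> = (\<integral>\<^sup>+\<rho>. ennreal (F \<rho>) * indicator {0..L2} \<rho> \<partial>lborel)"
  proof (rule nn_integral_cong)
    fix \<rho> :: real
    show "indicator {0<..} \<rho> * ennreal (\<rho>^(CARD('n)-1)) *
            (\<integral>\<^sup>+\<omega>. ennreal (k (\<rho> *\<^sub>R \<omega>)) \<partial>(unit_sphere_measure::(real^'n) measure)) = ennreal (F \<rho>) * indicator {0..L2} \<rho>"
    proof (cases "\<rho> > 0")
      case False
      have "F \<rho> * indicator {0..L2} \<rho> = 0"
      proof (cases "\<rho> = 0")
        case True
        then show ?thesis using N2 unfolding F_def Jt N_def by simp
      qed (use False in auto)
      then have "ennreal (F \<rho>) * indicator {0..L2} \<rho> = 0"
        by (metis ennreal_0 ennreal_indicator ennreal_mult'' indicator_pos_le)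
      then show ?thesis using False by simp
    next
      case True
      have inner: "(\<integral>\<^sup>+\<omega>. ennreal (k (\<rho> *\<^sub>R \<omega>)) \<partial>(unit_sphere_measure::(real^'n) measure)) = ennreal (max 0 (psi L1 L2 \<rho>)) * Q \<rho>"
      proof -
        have "(\<integral>\<^sup>+\<omega>. ennreal (k (\<rho> *\<^sub>R \<omega>)) \<partial>(unit_sphere_measure::(real^'n) measure)) =
            (\<integral>\<^sup>+u. ennreal (real CARD('n)) * (ennreal (k (\<rho> *\<^sub>R sgn u)) * indicator S u) \<partial>lborel)"
          unfolding S_def by (rule sphere_nn) measurable
        also have "\<dots> = (\<integral>\<^sup>+u. ennreal (max 0 (psi L1 L2 \<rho>)) * (ennreal (real CARD('n)) * (ennreal (Jp (norm (x - \<rho> *\<^sub>R sgn u))) * indicator S u)) \<partial>lborel)"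
        proof (rule nn_integral_cong)
          fix u :: "real^'n"
          show "ennreal (real CARD('n)) * (ennreal (k (\<rho> *\<^sub>R sgn u)) * indicator S u) =
                ennreal (max 0 (psi L1 L2 \<rho>)) * (ennreal (real CARD('n)) * (ennreal (Jp (norm (x - \<rho> *\<^sub>R sgn u))) * indicator S u))"
          proof (cases "u \<in> S")
            case True
            then have "norm (\<rho> *\<^sub>R sgn u) = \<rho>" using \<open>\<rho> > 0\<close> by (auto simp: S_def norm_sgn)
            then have "k (\<rho> *\<^sub>R sgn u) = Jp (norm (x - \<rho> *\<^sub>R sgn u)) * max 0 (psi L1 L2 \<rho>)"
              unfolding k_def by simp
            then show ?thesis using True by (simp add: ennreal_mult nonneg ac_simps)
          qed simp
        qed
        also have "\<dots> = ennreal (max 0 (psi L1 L2 \<rho>)) * Q \<rho>"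
          unfolding Qalt by (rule nn_integral_cmult) measurable
        finally show ?thesis .
      qed
      show ?thesis
      proof (cases "\<rho> \<le> L2")
        case False
        then have "psi L1 L2 \<rho> < 0" using L True unfolding psi_def by (auto simp: min_def divide_less_0_iff)
        then show ?thesis unfolding inner using False by (simp add: max_def)
      next
        case le: True
        have ps: "max 0 (psi L1 L2 \<rho>) = psi L1 L2 \<rho>" using psi_nn[of \<rho>] le True by auto
        have "Q \<rho> = ennreal (enn2real (Q \<rho>))" using Qfin[of \<rho>] by (simp add: ennreal_enn2real_if)
        then show ?thesis unfolding inner ps F_def Jt N_def using True le psi_nn[of \<rho>]
          by (simp add: ennreal_mult'' ennreal_mult ac_simps)
      qed
    qed
  qed
  also have "\<dots> = ennreal (integral {0..L2} F)"
  proof -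
    have fin: "(\<integral>\<^sup>+\<rho>. ennreal (F \<rho>) * indicator {0..L2} \<rho> \<partial>lborel) < \<infinity>"
      using calculation kfin by simp
    have "set_borel_measurable borel {0..L2} F"
      unfolding set_borel_measurable_def by measurable
    then show ?thesis
      using set_nn_integral_lborel_eq_integral[of "{0..L2}" F] F_nn fin by auto
  qed
  finally have A: "(\<integral>\<^sup>+y. ennreal (k y) \<partial>lborel) = ennreal (integral {0..L2} F)" .
  have B: "0 \<le> integral {0..L2} F"
  proof (cases "F integrable_on {0..L2}")
    case True
    then show ?thesis using F_nn by (intro integral_nonneg) auto
  qed (simp add: not_integrable_integral)
  show ?thesis using A B unfolding k_def F_def by simp
qed



lemma parallelogram:
  fixes x z :: "'a::real_inner"
  shows "norm (x + z)^2 + norm (x - z)^2 = 2 * norm x^2 + 2 * norm z^2"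
  by (simp add: power2_norm_eq_inner inner_add_left inner_add_right inner_diff_left inner_diff_right inner_commute algebra_simps)

lemma sym_bound:
  fixes x z :: "real^'n::finite"
  assumes L1: "0 < L1" and r: "0 < norm x" "norm x \<le> L2" and t: "norm z \<le> R" and d: "R / L1 \<le> 1/2"
  shows "max 0 (psi L1 L2 (norm (x+z))) + max 0 (psi L1 L2 (norm (x-z))) \<ge>
           2 * psi L1 L2 (norm x) * (1 - R/L1) - R^2/(L1 * norm x)"
proof -
  define r where "r = norm x"
  define a where "a = norm (x + z)"
  define b where "b = norm (x - z)"
  define t where "t = norm z"
  have t0: "0 \<le> t" unfolding t_def by simp
  have R0: "0 \<le> R" using t norm_ge_zero[of z] by linarith
  have r0: "0 < r" using r r_def by simp
  have a0: "0 \<le> a" "0 \<le> b" unfolding a_def b_def by simp_all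
  have par: "a^2 + b^2 = 2*r^2 + 2*t^2" unfolding a_def b_def r_def t_def by (rule parallelogram)
  have sq: "(a + b)^2 \<le> (2*r + t^2/r)^2"
  proof -
    have "0 \<le> (a-b)^2" by simp
    then have "(a+b)^2 \<le> 2*(a^2+b^2)" unfolding power2_sum power2_diff by (simp add: algebra_simps)
    also have "\<dots> = 4*r^2 + 4*t^2" using par by simp
    also have "\<dots> \<le> (2*r + t^2/r)^2" using r0 t0
      by (simp add: power2_eq_square field_simps)
    finally show ?thesis .
  qed
  have pos: "0 \<le> 2*r + t^2/r" using r0 by (intro add_nonneg_nonneg) auto
  have sum: "a + b \<le> 2*r + t^2/r"
    by (rule power2_le_imp_le[OF sq pos])
  have la: "r - t \<le> a" "a \<le> r + t" "r - t \<le> b" "b \<le> r + t"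
    unfolding a_def b_def r_def t_def
    by (rule norm_diff_ineq, rule norm_triangle_ineq, rule norm_triangle_ineq2, rule norm_triangle_ineq4)
  define \<delta> where "\<delta> = R / L1"
  define ga where "ga = (L2 - a) / L1"
  define gb where "gb = (L2 - b) / L1"
  define gx where "gx = (L2 - r) / L1"
  define f where "f = min 1 gx"
  have psis: "psi L1 L2 (norm (x+z)) = min 1 ga" "psi L1 L2 (norm (x-z)) = min 1 gb" "psi L1 L2 (norm x) = f"
    unfolding psi_def ga_def gb_def f_def gx_def a_def b_def r_def by simp_all
  have e: "t^2/(L1*r) \<le> R^2/(L1*r)"
    using t t0 r0 L1 unfolding t_def by (intro divide_right_mono power_mono) auto
  have gsum: "ga + gb \<ge> 2*gx - t^2/(L1*r)"
  proof -
    have "ga + gb = (2*L2 - (a+b))/L1" unfolding ga_def gb_def using L1 by (simp add: field_simps)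
    also have "\<dots> \<ge> (2*L2 - (2*r + t^2/r))/L1" using sum L1 by (intro divide_right_mono) auto
    also have "(2*L2 - (2*r + t^2/r))/L1 = 2*gx - t^2/(L1*r)"
      unfolding gx_def using L1 r0 by (simp add: field_simps)
    finally show ?thesis .
  qed
  have tl: "t / L1 \<le> \<delta>" unfolding \<delta>_def using t L1 t_def by (simp add: divide_right_mono)
  have lip: "ga \<ge> gx - t/L1" "gb \<ge> gx - t/L1" "gx \<ge> ga - t/L1" "gx \<ge> gb - t/L1"
  proof -
    have gen: "(L2 - p)/L1 \<ge> (L2 - q)/L1 - t/L1" if "p \<le> q + t" for p q
    proof -
      have "(L2 - q)/L1 - t/L1 = (L2 - (q+t))/L1" by (simp add: diff_divide_distrib add_divide_distrib)
      also have "\<dots> \<le> (L2 - p)/L1" using that L1 by (intro divide_right_mono) auto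
      finally show ?thesis .
    qed
    show "ga \<ge> gx - t/L1" "gb \<ge> gx - t/L1" "gx \<ge> ga - t/L1" "gx \<ge> gb - t/L1"
      unfolding ga_def gb_def gx_def using la by (auto intro!: gen)
  qed
  have f0: "0 \<le> f" unfolding f_def gx_def using r L1 r_def by auto
  have fd: "2 * f * \<delta> \<ge> 0" using f0 R0 L1 unfolding \<delta>_def by simp
  have d0: "\<delta> \<ge> 0" using R0 L1 unfolding \<delta>_def by simp
  have fd2: "2 * f * \<delta> \<ge> \<delta>" if "f \<ge> 1/2"
  proof -
    have "(2*f - 1) * \<delta> \<ge> 0" using that d0 by (intro mult_nonneg_nonneg) auto
    then show ?thesis by (simp add: algebra_simps)
  qed
  have e0: "t^2/(L1*r) \<ge> 0" using L1 r0 by simp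
  have f1: "f \<le> 1" "f \<le> gx" unfolding f_def by auto
  have fh: "f \<ge> 1/2" if "gx \<ge> 1/2" using that unfolding f_def by auto
  have dh: "\<delta> \<le> 1/2" using d unfolding \<delta>_def .
  have main: "min 1 ga + min 1 gb \<ge> 2*f - 2*f*\<delta> - t^2/(L1*r)"
  proof (cases "ga \<le> 1")
    case ga: True
    show ?thesis
    proof (cases "gb \<le> 1")
      case True
      then have "min 1 ga + min 1 gb = ga + gb" using ga by simp
      then show ?thesis using gsum fd f1 by linarith
    next
      case False
      then have m: "min 1 ga + min 1 gb = ga + 1" using ga by simp
      have "gx \<ge> 1/2" using lip(4) False tl dh by linarith
      then have "2*f*\<delta> \<ge> \<delta>" using fh fd2 by blast
      then show ?thesis unfolding m using lip(1) tl f1 e0 by linarith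
    qed
  next
    case ga: False
    show ?thesis
    proof (cases "gb \<le> 1")
      case True
      then have m: "min 1 ga + min 1 gb = 1 + gb" using ga by simp
      have "gx \<ge> 1/2" using lip(3) ga tl dh by linarith
      then have "2*f*\<delta> \<ge> \<delta>" using fh fd2 by blast
      then show ?thesis unfolding m using lip(2) tl f1 e0 by linarith
    next
      case False
      then have "min 1 ga + min 1 gb = 2" using ga by simp
      then show ?thesis using fd f1 e0 by linarith
    qed
  qed
  have "max 0 (min 1 ga) + max 0 (min 1 gb) \<ge> min 1 ga + min 1 gb" by simp
  then show ?thesis unfolding psis using main e unfolding \<delta>_def r_def[symmetric]
    by (simp add: algebra_simps)
qed



theorem lemma7p4:
  fixes J :: "real \<Rightarrow> real"
  assumes dim: "CARD('n::finite) \<ge> 2"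
    and J_cont: "continuous_on {0..} J"
    and J_bdd: "\<exists>M. \<forall>r\<ge>0. \<bar>J r\<bar> \<le> M"
    and J_nonneg: "\<forall>r\<ge>0. J r \<ge> 0"
    and J_pos0: "J 0 > 0"
    and J_mass: "((\<lambda>x::real^'n. J (norm x)) has_integral 1) UNIV"
    and J1: "(\<lambda>r. J r * r ^ CARD('n)) integrable_on {0..}"
  shows "\<exists>\<epsilon>0>0. \<forall>\<epsilon>. 0 < \<epsilon> \<and> \<epsilon> < \<epsilon>0 \<longrightarrow>
           (\<exists>L\<epsilon>>0. \<exists>D1>0. \<exists>D2>0. \<forall>L1 L2. 0 < L1 \<and> L1 < L2 \<and> L1 > L\<epsilon> \<and> L2 - L1 > 2 * L\<epsilon> \<longrightarrow>
              (\<forall>x::real^'n. norm x \<le> (L2 - L1) / 2 \<longrightarrow>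
                 integral {0..L2} (\<lambda>\<rho>. Jtilde J x \<rho> * psi L1 L2 \<rho>) \<ge> (1 - \<epsilon>) * psi L1 L2 (norm x)) \<and>
              (\<forall>x::real^'n. (L2 - L1) / 2 \<le> norm x \<and> norm x \<le> L2 \<longrightarrow>
                 integral {0..L2} (\<lambda>\<rho>. Jtilde J x \<rho> * psi L1 L2 \<rho>) \<ge>
                   (1 - \<epsilon>) * psi L1 L2 (norm x) - D1 / (L1 * norm x) - D2 / (norm x)^2))"
proof -
  obtain M where M: "\<forall>r\<ge>0. \<bar>J r\<bar> \<le> M" using J_bdd by blast
  define Jp where "Jp = (\<lambda>r. J (max 0 r))"
  have Jp_cont: "continuous_on UNIV Jp"
    unfolding Jp_def by (rule continuous_on_compose2[OF J_cont]) (auto intro!: continuous_intros)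
  have Jm[measurable]: "Jp \<in> borel_measurable borel" by (rule borel_measurable_continuous_onI[OF Jp_cont])
  have Jnn: "0 \<le> Jp r" for r unfolding Jp_def using J_nonneg by auto
  have Jb: "Jp r \<le> M" for r
  proof -
    have "\<bar>J (max 0 r)\<bar> \<le> M" using M by auto
    then show ?thesis unfolding Jp_def by simp
  qed
  have JJ: "J r = Jp r" if "r \<ge> 0" for r unfolding Jp_def using that by simp
  have one: "(\<integral>\<^sup>+z. ennreal (Jp (norm z)) \<partial>(lborel::(real^'n) measure)) = 1"
  proof -
    have "integral\<^sup>N lborel (\<lambda>x::real^'n. indicator UNIV x * J (norm x)) = ennreal 1"
      by (rule nn_integral_has_integral_lebesgue[OF _ J_mass]) (simp add: J_nonneg)
    then show ?thesis by (simp add: Jp_def)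
  qed
  have cb[measurable]: "cball (0::real^'n) R \<in> sets borel" for R by auto
  have psi_one: "psi L1 L2 (norm y) = 1" if "norm y \<le> L2 - L1" "0 < L1" for L1 L2 and y :: "real^'n"
  proof -
    have "1 \<le> (L2 - norm y) / L1" using that by (simp add: le_divide_eq)
    then show ?thesis unfolding psi_def by simp
  qed
  have tail: "\<exists>R\<ge>1. ennreal (1 - e) \<le> (\<integral>\<^sup>+z. ennreal (Jp (norm z) * indicator (cball 0 R) z) \<partial>(lborel::(real^'n) measure))"
    if e: "0 < e" "e < 1" for e
  proof -
    define f where "f = (\<lambda>n (z::real^'n). ennreal (Jp (norm z) * indicator (cball 0 (real (Suc n))) z))"
    have fm[measurable]: "f n \<in> borel_measurable lborel" for n unfolding f_def by measurable
    have inc: "incseq f"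
      unfolding incseq_def le_fun_def f_def
      by (auto intro!: ennreal_leI simp: indicator_def Jnn)
    have sup: "(SUP n. f n z) = ennreal (Jp (norm z))" for z
    proof (rule antisym)
      show "(SUP n. f n z) \<le> ennreal (Jp (norm z))"
        by (rule SUP_least) (auto simp: f_def indicator_def intro!: ennreal_leI Jnn)
      obtain n where n: "norm z < real n" using reals_Archimedean2 by blast
      then have "f n z = ennreal (Jp (norm z))" by (simp add: f_def)
      then show "ennreal (Jp (norm z)) \<le> (SUP n. f n z)" by (metis SUP_upper UNIV_I)
    qed
    have "(SUP n. \<integral>\<^sup>+z. f n z \<partial>lborel) = 1"
      using nn_integral_monotone_convergence_SUP[OF inc fm] sup one by simp
    moreover have "ennreal (1 - e) < ennreal 1" using e by (intro ennreal_lessI) auto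
    ultimately have "ennreal (1 - e) < (SUP n. \<integral>\<^sup>+z. f n z \<partial>lborel)" by simp
    then obtain n where "ennreal (1 - e) < (\<integral>\<^sup>+z. f n z \<partial>lborel)" by (auto simp: less_SUP_iff)
    then show ?thesis by (intro exI[of _ "real (Suc n)"]) (auto simp: f_def)
  qed
  show ?thesis
  proof (rule exI[of _ 1], intro conjI allI impI)
    show "(0::real) < 1" by simp
    fix \<epsilon> :: real assume \<epsilon>: "0 < \<epsilon> \<and> \<epsilon> < 1"
    obtain R where R1: "R \<ge> 1" and mR: "ennreal (1 - \<epsilon>/2) \<le> (\<integral>\<^sup>+z. ennreal (Jp (norm z) * indicator (cball 0 R) z) \<partial>(lborel::(real^'n) measure))"
      using tail[of "\<epsilon>/2"] \<epsilon> by auto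
    define Le where "Le = 2*R/\<epsilon>"
    have Le0: "Le > 0" unfolding Le_def using R1 \<epsilon> by simp
    have RLe: "R < Le" unfolding Le_def using R1 \<epsilon> by (simp add: field_simps)
    have key: "\<forall>L1 L2. 0 < L1 \<and> L1 < L2 \<and> L1 > Le \<and> L2 - L1 > 2 * Le \<longrightarrow>
              (\<forall>x::real^'n. norm x \<le> (L2 - L1) / 2 \<longrightarrow>
                 integral {0..L2} (\<lambda>\<rho>. Jtilde J x \<rho> * psi L1 L2 \<rho>) \<ge> (1 - \<epsilon>) * psi L1 L2 (norm x)) \<and>
              (\<forall>x::real^'n. (L2 - L1) / 2 \<le> norm x \<and> norm x \<le> L2 \<longrightarrow>
                 integral {0..L2} (\<lambda>\<rho>. Jtilde J x \<rho> * psi L1 L2 \<rho>) \<ge>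
                   (1 - \<epsilon>) * psi L1 L2 (norm x) - (R^2/2) / (L1 * norm x) - 1 / (norm x)^2)"
    proof (intro allI impI conjI)
      fix L1 L2 :: real assume L: "0 < L1 \<and> L1 < L2 \<and> L1 > Le \<and> L2 - L1 > 2 * Le"
      have L': "0 < L1" "L1 < L2" "Le < L1" "2*Le < L2 - L1" using L by auto
      have RL: "R / L1 \<le> \<epsilon>/2"
      proof -
        have "R / L1 \<le> R / Le" using L Le0 R1 by (intro divide_left_mono) auto
        also have "R / Le = \<epsilon>/2" unfolding Le_def using R1 \<epsilon> by (simp add: field_simps)
        finally show ?thesis .
      qed
      have red: "(\<integral>\<^sup>+y. ennreal (Jp (norm (x - y)) * max 0 (psi L1 L2 (norm y))) \<partial>lborel)
           = ennreal (integral {0..L2} (\<lambda>\<rho>. Jtilde J x \<rho> * psi L1 L2 \<rho>)) \<and>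
         0 \<le> integral {0..L2} (\<lambda>\<rho>. Jtilde J x \<rho> * psi L1 L2 \<rho>)" for x :: "real^'n"
        by (rule reduce[OF Jm Jnn Jb one dim _ _ JJ]) (use L in auto)
      have km[measurable]: "(\<lambda>y. ennreal (Jp (norm (x - y)) * max 0 (psi L1 L2 (norm y)))) \<in> borel_measurable borel" for x :: "real^'n"
        unfolding psi_def by measurable
      have tr: "(\<integral>\<^sup>+y. ennreal (Jp (norm (x - y)) * max 0 (psi L1 L2 (norm y))) \<partial>lborel)
          = (\<integral>\<^sup>+u. ennreal (Jp (norm u) * max 0 (psi L1 L2 (norm (x + u)))) \<partial>lborel)"
          "(\<integral>\<^sup>+y. ennreal (Jp (norm (x - y)) * max 0 (psi L1 L2 (norm y))) \<partial>lborel)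
          = (\<integral>\<^sup>+u. ennreal (Jp (norm u) * max 0 (psi L1 L2 (norm (x - u)))) \<partial>lborel)" for x :: "real^'n"
        using translate_nn(1)[OF km[of x], of x] translate_nn(2)[OF km[of x], of x] by simp_all
      show "(1 - \<epsilon>) * psi L1 L2 (norm x) \<le> integral {0..L2} (\<lambda>\<rho>. Jtilde J x \<rho> * psi L1 L2 \<rho>)"
        if x: "norm x \<le> (L2 - L1) / 2" for x :: "real^'n"
      proof -
        define I where "I = integral {0..L2} (\<lambda>\<rho>. Jtilde J x \<rho> * psi L1 L2 \<rho>)"
        have I0: "0 \<le> I" using red[of x] unfolding I_def by simp
        have ps: "psi L1 L2 (norm x) = 1" using x L psi_one by auto
        have "ennreal (1 - \<epsilon>) \<le> ennreal (1 - \<epsilon>/2)" using \<epsilon> by (intro ennreal_leI) auto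
        also have "\<dots> \<le> (\<integral>\<^sup>+z. ennreal (Jp (norm z) * indicator (cball 0 R) z) \<partial>(lborel::(real^'n) measure))" by (rule mR)
        also have "\<dots> \<le> (\<integral>\<^sup>+u. ennreal (Jp (norm u) * max 0 (psi L1 L2 (norm (x + u)))) \<partial>lborel)"
        proof (intro nn_integral_mono ennreal_leI)
          fix u :: "real^'n"
          show "Jp (norm u) * indicator (cball 0 R) u \<le> Jp (norm u) * max 0 (psi L1 L2 (norm (x + u)))"
          proof (cases "u \<in> cball 0 R")
            case True
            then have "norm u \<le> R" by simp
            have t1: "Le < (L2 - L1)/2" using L'(4) by (simp add: field_simps)
            have t2: "norm x + norm u \<le> (L2 - L1)/2 + R" using x \<open>norm u \<le> R\<close> by linarith
            have nn: "norm x + norm u \<le> L2 - L1" using t1 t2 RLe by argo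
            have "norm (x+u) \<le> L2 - L1" using norm_triangle_ineq[of x u] nn by linarith
            then have "psi L1 L2 (norm (x+u)) = 1" using psi_one L by auto
            then show ?thesis using True by simp
          next
            case False
            then show ?thesis using Jnn[of "norm u"] by simp
          qed
        qed
        also have "\<dots> = ennreal I" using tr(1)[of x] red[of x] unfolding I_def by simp
        finally have "1 - \<epsilon> \<le> I" using I0 by simp
        then show ?thesis using ps unfolding I_def by simp
      qed
      show "(1 - \<epsilon>) * psi L1 L2 (norm x) - R^2/2 / (L1 * norm x) - 1 / (norm x)^2 \<le> integral {0..L2} (\<lambda>\<rho>. Jtilde J x \<rho> * psi L1 L2 \<rho>)"
        if x: "(L2 - L1) / 2 \<le> norm x \<and> norm x \<le> L2" for x :: "real^'n"
      proof -
        define I where "I = integral {0..L2} (\<lambda>\<rho>. Jtilde J x \<rho> * psi L1 L2 \<rho>)"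
        have I0: "0 \<le> I" using red[of x] unfolding I_def by simp
        have r0: "0 < norm x" using x L' Le0 by argo
        define f where "f = psi L1 L2 (norm x)"
        have f0: "0 \<le> f" unfolding f_def psi_def using x L by auto
        define E where "E = R^2/(L1 * norm x)"
        have E0: "0 \<le> E" unfolding E_def using L r0 by simp
        define c where "c = max 0 (2*f*(1 - R/L1) - E)"
        have c0: "0 \<le> c" unfolding c_def by simp
        have RL2: "R / L1 \<le> 1/2" using RL \<epsilon> by linarith
        have pw: "c \<le> max 0 (psi L1 L2 (norm (x+u))) + max 0 (psi L1 L2 (norm (x-u)))" if u: "norm u \<le> R" for u :: "real^'n"
          using sym_bound[of L1 x L2 u R] L r0 x u RL2 unfolding c_def f_def E_def by auto
        have "ennreal (c * (1 - \<epsilon>/2)) = ennreal c * ennreal (1 - \<epsilon>/2)"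
          using c0 \<epsilon> by (simp add: ennreal_mult)
        also have "\<dots> \<le> ennreal c * (\<integral>\<^sup>+z. ennreal (Jp (norm z) * indicator (cball 0 R) z) \<partial>(lborel::(real^'n) measure))"
          by (intro mult_left_mono mR) simp
        also have "\<dots> = (\<integral>\<^sup>+z. ennreal c * ennreal (Jp (norm z) * indicator (cball 0 R) z) \<partial>(lborel::(real^'n) measure))"
          by (rule nn_integral_cmult[symmetric]) measurable
        also have "\<dots> \<le> (\<integral>\<^sup>+u. ennreal (Jp (norm u) * max 0 (psi L1 L2 (norm (x + u)))) + ennreal (Jp (norm u) * max 0 (psi L1 L2 (norm (x - u)))) \<partial>lborel)"
        proof (intro nn_integral_mono)
          fix u :: "real^'n"
          have "c * (Jp (norm u) * indicator (cball 0 R) u) \<le> Jp (norm u) * max 0 (psi L1 L2 (norm (x + u))) + Jp (norm u) * max 0 (psi L1 L2 (norm (x - u)))"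
          proof (cases "u \<in> cball 0 R")
            case True
            then have "c * Jp (norm u) \<le> (max 0 (psi L1 L2 (norm (x+u))) + max 0 (psi L1 L2 (norm (x-u)))) * Jp (norm u)"
              using pw[of u] Jnn[of "norm u"] by (intro mult_right_mono) (auto simp: mult.commute)
            then show ?thesis using True by (simp add: algebra_simps)
          next
            case False
            then show ?thesis using Jnn[of "norm u"] by simp
          qed
          then show "ennreal c * ennreal (Jp (norm u) * indicator (cball 0 R) u) \<le> ennreal (Jp (norm u) * max 0 (psi L1 L2 (norm (x + u)))) + ennreal (Jp (norm u) * max 0 (psi L1 L2 (norm (x - u))))"
            using c0 Jnn[of "norm u"] by (simp add: ennreal_mult[symmetric] ennreal_plus[symmetric] del: ennreal_plus)
        qed
        also have "\<dots> = (\<integral>\<^sup>+u. ennreal (Jp (norm u) * max 0 (psi L1 L2 (norm (x + u)))) \<partial>lborel) + (\<integral>\<^sup>+u. ennreal (Jp (norm u) * max 0 (psi L1 L2 (norm (x - u)))) \<partial>lborel)"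
          by (rule nn_integral_add) (unfold psi_def, measurable)
        also have "\<dots> = ennreal I + ennreal I" using tr[of x] red[of x] unfolding I_def by simp
        also have "\<dots> = ennreal (2 * I)" using I0 by (simp add: ennreal_plus[symmetric] del: ennreal_plus)
        finally have main: "c * (1 - \<epsilon>/2) \<le> 2 * I" using I0 by simp
        have cb: "c \<ge> 2*f*(1 - R/L1) - E" unfolding c_def by simp
        have A: "c * (1 - \<epsilon>/2) \<ge> (2*f*(1 - R/L1) - E) * (1 - \<epsilon>/2)"
          using cb \<epsilon> by (intro mult_right_mono) auto
        have B: "(2*f*(1 - R/L1) - E) * (1 - \<epsilon>/2) = 2*(f*(1 - R/L1)*(1 - \<epsilon>/2)) - E*(1 - \<epsilon>/2)"
          using L'(1) by (simp add: field_simps)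
        have C: "f*(1 - R/L1)*(1 - \<epsilon>/2) \<ge> f*(1 - \<epsilon>/2)*(1 - \<epsilon>/2)"
          using RL f0 \<epsilon> by (intro mult_right_mono mult_left_mono) auto
        have sq: "(1 - \<epsilon>/2)*(1 - \<epsilon>/2) \<ge> 1 - \<epsilon>"
        proof -
          have "0 \<le> \<epsilon>*\<epsilon>" by simp
          then show ?thesis by (simp add: algebra_simps)
        qed
        have D: "f*(1 - \<epsilon>/2)*(1 - \<epsilon>/2) \<ge> f*(1 - \<epsilon>)"
          using mult_left_mono[OF sq f0] by (simp add: mult.assoc)
        have Ee: "E*(1 - \<epsilon>/2) \<le> E" using E0 \<epsilon> by (simp add: mult_left_le)
        have EE: "R^2/2 / (L1 * norm x) = E/2" unfolding E_def by simp
        have r2: "0 \<le> 1 / (norm x)^2" by simp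
        have fin: "f*(1 - \<epsilon>) - E/2 \<le> I" using main A B C D Ee by linarith
        have cm: "(1 - \<epsilon>) * f = f*(1 - \<epsilon>)" by (rule mult.commute)
        have "(1 - \<epsilon>) * f - E/2 - 1 / (norm x)^2 \<le> I" using fin r2 cm by argo
        then show ?thesis unfolding EE I_def f_def .
      qed
    qed
    show "\<exists>L\<epsilon>>0. \<exists>D1>0. \<exists>D2>0. \<forall>L1 L2. 0 < L1 \<and> L1 < L2 \<and> L1 > L\<epsilon> \<and> L2 - L1 > 2 * L\<epsilon> \<longrightarrow>
              (\<forall>x::real^'n. norm x \<le> (L2 - L1) / 2 \<longrightarrow>
                 integral {0..L2} (\<lambda>\<rho>. Jtilde J x \<rho> * psi L1 L2 \<rho>) \<ge> (1 - \<epsilon>) * psi L1 L2 (norm x)) \<and>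
              (\<forall>x::real^'n. (L2 - L1) / 2 \<le> norm x \<and> norm x \<le> L2 \<longrightarrow>
                 integral {0..L2} (\<lambda>\<rho>. Jtilde J x \<rho> * psi L1 L2 \<rho>) \<ge>
                   (1 - \<epsilon>) * psi L1 L2 (norm x) - D1 / (L1 * norm x) - D2 / (norm x)^2)"
      apply (rule exI[of _ Le])
      apply (rule conjI[OF Le0])
      apply (rule exI[of _ "R^2/2"])
      apply (rule conjI)
      using R1 apply simp
      apply (rule exI[of _ 1])
      apply (rule conjI)
       apply simp
      by (rule key)
  qed
qed

end
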